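(* If $\mu>2$, then $C_c^\infty(\mathbb{R}_+)$ is dense in $\mathcal{D}_\mu(\mathbb{R}_+)$.
   Context: $\mathbb{R}_+=(0,\infty)$, $g'=dg/dx$, $g''=d^2g/dx^2$. For $\mu>0$, $C^\infty_\mu(\mathbb{R}_+)$ is the set of real smooth functions $g$ on $(0,\infty)$ with $\limsup_{x\to0}(|g(x)|+|g'(x)|)<\infty$ and $\lim_{x\to\infty}\left(x^{\mu+1}(g'(x))^2+x^\mu(g(x))^2\right)=0$. The space $\mathcal{D}_\mu(\mathbb{R}_+)$ is the Hilbert space completion of $\{g\in C^\infty_\mu(\mathbb{R}_+):\|g\|_{\mathcal{D}_\mu}<\infty\}$ with respect to the norm \[ \|g\|_{\mathcal{D}_\mu}=\left(4\int_0^\infty (g'')^2x^{\mu+1}dx+\int_0^\infty (g')^2(x+1)x^\mu dx+\int_0^\infty g^2x^{\mu-1}dx\right)^{1/2}. \] Density is with respect to this norm. *)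

theory Defs
  imports "HOL-Analysis.Analysis"
begin

definition smooth_on :: "real set \<Rightarrow> (real \<Rightarrow> real) \<Rightarrow> bool" where
  "smooth_on S g \<longleftrightarrow> (\<forall>n. \<forall>x\<in>S. ((deriv ^^ n) g) differentiable (at x))"

definition Cinf_mu :: "real \<Rightarrow> (real \<Rightarrow> real) \<Rightarrow> bool" where
  "Cinf_mu \<mu> g \<longleftrightarrow> smooth_on {0<..} g
     \<and> Limsup (at_right 0) (\<lambda>x. ereal (\<bar>g x\<bar> + \<bar>deriv g x\<bar>)) < \<infinity>
     \<and> ((\<lambda>x. x powr (\<mu> + 1) * (deriv g x)\<^sup>2 + x powr \<mu> * (g x)\<^sup>2) \<longlongrightarrow> 0) at_top"

definition D_norm_sq :: "real \<Rightarrow> (real \<Rightarrow> real) \<Rightarrow> ennreal" where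
  "D_norm_sq \<mu> g =
     4 * (\<integral>\<^sup>+ x. ennreal ((deriv (deriv g) x)\<^sup>2 * x powr (\<mu> + 1)) * indicator {0<..} x \<partial>lborel)
     + (\<integral>\<^sup>+ x. ennreal ((deriv g x)\<^sup>2 * (x + 1) * x powr \<mu>) * indicator {0<..} x \<partial>lborel)
     + (\<integral>\<^sup>+ x. ennreal ((g x)\<^sup>2 * x powr (\<mu> - 1)) * indicator {0<..} x \<partial>lborel)"

definition Cc_inf :: "(real \<Rightarrow> real) \<Rightarrow> bool" where
  "Cc_inf \<phi> \<longleftrightarrow> smooth_on {0<..} \<phi>
     \<and> (\<exists>a b. 0 < a \<and> a \<le> b \<and> (\<forall>x>0. x \<notin> {a..b} \<longrightarrow> \<phi> x = 0))"

end

theory Submission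
  imports Defs "HOL-Computational_Algebra.Polynomial"
begin

lemma deriv_local:
  assumes "open S" "x \<in> S" "\<And>y. y \<in> S \<Longrightarrow> f y = g y"
  shows "deriv f x = deriv g x"
proof -
  have "(\<lambda>D. (f has_field_derivative D) (at x)) = (\<lambda>D. (g has_field_derivative D) (at x))"
  proof (intro ext iffI)
    fix D assume "(f has_field_derivative D) (at x)"
    then show "(g has_field_derivative D) (at x)"
      by (rule has_field_derivative_transform_within_open[OF _ assms(1,2)]) (use assms(3) in blast)
  next
    fix D assume "(g has_field_derivative D) (at x)"
    then show "(f has_field_derivative D) (at x)"
      by (rule has_field_derivative_transform_within_open[OF _ assms(1,2)]) (use assms(3) in metis)
  qed
  then show ?thesis unfolding deriv_def by simp
qed

lemma diff_local:
  fixes f g :: "real \<Rightarrow> real"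
  assumes "open S" "x \<in> S" "\<And>y. y \<in> S \<Longrightarrow> f y = g y" "f differentiable at x"
  shows "g differentiable at x"
proof -
  obtain D where D: "(f has_real_derivative D) (at x)" using assms(4) real_differentiable_def by blast
  have "(g has_real_derivative D) (at x)"
    by (rule has_field_derivative_transform_within_open[OF D assms(1,2)]) (use assms(3) in blast)
  then show ?thesis using real_differentiable_def by blast
qed

lemma derivn_local:
  assumes "open S"
  shows "(\<And>y. y \<in> S \<Longrightarrow> f y = g y) \<Longrightarrow> x \<in> S \<Longrightarrow> (deriv ^^ n) f x = (deriv ^^ n) g x"
proof (induction n arbitrary: f g x)
  case 0 then show ?case by simp
next
  case (Suc n)
  have "\<And>y. y \<in> S \<Longrightarrow> deriv f y = deriv g y"
    using deriv_local[OF assms(1)] Suc.prems by blast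
  then show ?case using Suc.IH[of "deriv f" "deriv g" x] Suc.prems
    by (simp add: funpow_Suc_right del: funpow.simps)
qed

lemma rdiff_fd: fixes f :: "real \<Rightarrow> real" shows "f differentiable (at x) \<longleftrightarrow> f field_differentiable (at x)"
  by (metis real_differentiable_def field_differentiable_def)

lemma diff_inv: fixes f :: "real \<Rightarrow> real" assumes "f differentiable at x" "f x \<noteq> 0"
  shows "(\<lambda>y. inverse (f y)) differentiable at x"
  using assms unfolding real_differentiable_def by (blast intro: DERIV_inverse_fun)

lemma diff_aff: fixes h :: "real \<Rightarrow> real" assumes "h differentiable at (a*x+b)"
  shows "(\<lambda>y. h (a*y+b)) differentiable at x"
proof -
  obtain D where "(h has_real_derivative D) (at (a*x+b))" using assms real_differentiable_def by blast
  then have "((\<lambda>y. h (a*y+b)) has_real_derivative D * a) (at x)"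
    by (auto intro!: derivative_eq_intros DERIV_chain2[where f=h])
  then show ?thesis using real_differentiable_def by blast
qed

definition Cn :: "nat \<Rightarrow> real set \<Rightarrow> (real \<Rightarrow> real) \<Rightarrow> bool" where
  "Cn n S f \<longleftrightarrow> (\<forall>m\<le>n. \<forall>x\<in>S. ((deriv ^^ m) f) differentiable (at x))"

lemma smooth_Cn: "smooth_on S f \<longleftrightarrow> (\<forall>n. Cn n S f)"
  unfolding smooth_on_def Cn_def by blast

lemma Cn_0: "Cn 0 S f \<longleftrightarrow> (\<forall>x\<in>S. f differentiable (at x))"
  unfolding Cn_def by simp

lemma Cn_Suc: "Cn (Suc n) S f \<longleftrightarrow> (\<forall>x\<in>S. f differentiable (at x)) \<and> Cn n S (deriv f)"
  unfolding Cn_def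
proof safe
  fix m x assume "\<forall>m\<le>Suc n. \<forall>x\<in>S. (deriv ^^ m) f differentiable at x" "m \<le> n" "x \<in> S"
  then show "(deriv ^^ m) (deriv f) differentiable at x"
    by (metis Suc_le_mono comp_apply funpow_Suc_right)
next
  fix x assume "\<forall>m\<le>Suc n. \<forall>x\<in>S. (deriv ^^ m) f differentiable at x" "x \<in> S"
  then show "f differentiable at x" by (metis funpow_0 le0)
next
  fix m x assume a: "\<forall>x\<in>S. f differentiable at x" "\<forall>m\<le>n. \<forall>x\<in>S. (deriv ^^ m) (deriv f) differentiable at x"
    "m \<le> Suc n" "x \<in> S"
  show "(deriv ^^ m) f differentiable at x"
  proof (cases m)
    case 0 then show ?thesis using a by simp
  next
    case (Suc k) then show ?thesis using a
      by (metis Suc_le_mono comp_apply funpow_Suc_right)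
  qed
qed

lemma Cn_mono: "Cn n S f \<Longrightarrow> m \<le> n \<Longrightarrow> Cn m S f"
  unfolding Cn_def by auto

lemma Cn_local:
  assumes "open S" "\<And>y. y \<in> S \<Longrightarrow> f y = g y" "Cn n S f"
  shows "Cn n S g"
  unfolding Cn_def
proof safe
  fix m x assume "m \<le> n" "x \<in> S"
  then have "(deriv ^^ m) f differentiable at x" using assms(3) unfolding Cn_def by blast
  moreover have "\<And>y. y \<in> S \<Longrightarrow> (deriv ^^ m) f y = (deriv ^^ m) g y"
    using derivn_local[OF assms(1), of f g] assms(2) by blast
  ultimately show "(deriv ^^ m) g differentiable at x"
    using diff_local[OF assms(1) \<open>x \<in> S\<close>, of "(deriv ^^ m) f" "(deriv ^^ m) g"] by blast
qed

lemma Cn_add: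
  assumes "open S"
  shows "Cn n S f \<Longrightarrow> Cn n S g \<Longrightarrow> Cn n S (\<lambda>x. f x + g x)"
proof (induction n arbitrary: f g)
  case 0 then show ?case by (auto simp: Cn_0)
next
  case (Suc n)
  have d: "\<And>y. y \<in> S \<Longrightarrow> deriv f y + deriv g y = deriv (\<lambda>x. f x + g x) y"
    using Suc.prems by (subst deriv_add) (auto simp: Cn_Suc rdiff_fd)
  have "Cn n S (\<lambda>x. deriv f x + deriv g x)" using Suc by (auto simp: Cn_Suc)
  then have "Cn n S (deriv (\<lambda>x. f x + g x))"
    using Cn_local[OF assms, of "\<lambda>x. deriv f x + deriv g x" "deriv (\<lambda>x. f x + g x)" n] d by blast
  then show ?case using Suc.prems by (auto simp: Cn_Suc)
qed

lemma Cn_mult: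
  assumes "open S"
  shows "Cn n S f \<Longrightarrow> Cn n S g \<Longrightarrow> Cn n S (\<lambda>x. f x * g x)"
proof (induction n arbitrary: f g)
  case 0 then show ?case by (auto simp: Cn_0)
next
  case (Suc n)
  have d: "\<And>y. y \<in> S \<Longrightarrow> deriv f y * g y + f y * deriv g y = deriv (\<lambda>x. f x * g x) y"
    using Suc.prems by (subst deriv_mult) (auto simp: Cn_Suc rdiff_fd)
  have "Cn n S (\<lambda>x. deriv f x * g x + f x * deriv g x)" using Suc Cn_mono[of "Suc n" S]
    by (intro Cn_add[OF assms] Suc.IH) (auto simp: Cn_Suc)
  then have "Cn n S (deriv (\<lambda>x. f x * g x))"
    using Cn_local[OF assms, of "\<lambda>x. deriv f x * g x + f x * deriv g x" "deriv (\<lambda>x. f x * g x)" n] d by blast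
  then show ?case using Suc.prems by (auto simp: Cn_Suc)
qed

lemma Cn_const: "Cn n S (\<lambda>x. c)"
proof (induction n arbitrary: c)
  case 0 then show ?case by (auto simp: Cn_0)
next
  case (Suc n)
  show ?case using Suc by (simp add: Cn_Suc)
qed

lemma smooth_add: "open S \<Longrightarrow> smooth_on S f \<Longrightarrow> smooth_on S g \<Longrightarrow> smooth_on S (\<lambda>x. f x + g x)"
  by (simp add: smooth_Cn Cn_add)
lemma smooth_mult: "open S \<Longrightarrow> smooth_on S f \<Longrightarrow> smooth_on S g \<Longrightarrow> smooth_on S (\<lambda>x. f x * g x)"
  by (simp add: smooth_Cn Cn_mult)
lemma smooth_const: "smooth_on S (\<lambda>x. c)"
  by (simp add: smooth_Cn Cn_const)
lemma smooth_diff: "open S \<Longrightarrow> smooth_on S f \<Longrightarrow> smooth_on S g \<Longrightarrow> smooth_on S (\<lambda>x. f x - g x)"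
  using smooth_add[of S f "\<lambda>x. (-1) * g x"] smooth_mult[of S "\<lambda>x. -1" g] smooth_const by simp
lemma smooth_subset: "smooth_on S f \<Longrightarrow> T \<subseteq> S \<Longrightarrow> smooth_on T f"
  unfolding smooth_on_def by blast
lemma smooth_deriv: "smooth_on S f \<Longrightarrow> smooth_on S (deriv f)"
  by (metis Cn_Suc smooth_Cn)
lemma smooth_differentiable: "smooth_on S f \<Longrightarrow> x \<in> S \<Longrightarrow> f differentiable (at x)"
  by (metis Cn_0 smooth_Cn)

lemma Cn_inverse:
  assumes "open S"
  shows "smooth_on S h \<Longrightarrow> (\<And>x. x \<in> S \<Longrightarrow> h x \<noteq> 0) \<Longrightarrow> Cn n S (\<lambda>x. inverse (h x))"
proof (induction n)
  case 0 then show ?case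
    by (auto simp: Cn_0 smooth_differentiable intro!: diff_inv)
next
  case (Suc n)
  have "\<And>y. y \<in> S \<Longrightarrow> deriv h y * (-1) * (inverse (h y) * inverse (h y)) = deriv (\<lambda>x. inverse (h x)) y"
  proof -
    fix y assume y: "y \<in> S"
    have "(h has_real_derivative deriv h y) (at y)" using Suc.prems y
      by (simp add: DERIV_deriv_iff_real_differentiable smooth_differentiable)
    then have "((\<lambda>x. inverse (h x)) has_real_derivative - (deriv h y * inverse (h y ^ Suc (Suc 0)))) (at y)"
      using Suc.prems(2)[OF y] by (rule DERIV_inverse_fun)
    then have "deriv (\<lambda>x. inverse (h x)) y = - (deriv h y * inverse (h y ^ Suc (Suc 0)))"
      by (rule DERIV_imp_deriv)
    then show "deriv h y * (-1) * (inverse (h y) * inverse (h y)) = deriv (\<lambda>x. inverse (h x)) y"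
      by (simp add: power2_eq_square inverse_mult_distrib)
  qed
  moreover have "Cn n S (\<lambda>y. deriv h y * (-1) * (inverse (h y) * inverse (h y)))"
    using Suc smooth_deriv[of S h] unfolding smooth_Cn by (intro Cn_mult[OF assms] Cn_const) auto
  ultimately have "Cn n S (deriv (\<lambda>x. inverse (h x)))"
    using Cn_local[OF assms, of "\<lambda>y. deriv h y * (-1) * (inverse (h y) * inverse (h y))" "deriv (\<lambda>x. inverse (h x))" n] by blast
  moreover have "\<forall>x\<in>S. (\<lambda>x. inverse (h x)) differentiable at x"
    using Suc.prems by (auto simp: smooth_differentiable intro!: diff_inv)
  ultimately show ?case unfolding Cn_Suc by blast
qed

lemma smooth_inverse: "open S \<Longrightarrow> smooth_on S h \<Longrightarrow> (\<And>x. x \<in> S \<Longrightarrow> h x \<noteq> 0) \<Longrightarrow> smooth_on S (\<lambda>x. inverse (h x))"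
  by (simp add: smooth_Cn Cn_inverse)

lemma Cn_affine:
  shows "smooth_on UNIV h \<Longrightarrow> Cn n UNIV (\<lambda>x. h (a * x + b))"
proof (induction n arbitrary: h)
  case 0
  have "(\<lambda>x. h (a * x + b)) differentiable at x" for x
    using 0 smooth_differentiable[of UNIV h "a*x+b"]
    by (auto intro!: diff_aff)
  then show ?case by (auto simp: Cn_0)
next
  case (Suc n)
  have "\<And>y. a * deriv h (a * y + b) = deriv (\<lambda>x. h (a * x + b)) y"
  proof -
    fix y
    have "(h has_real_derivative deriv h (a*y+b)) (at (a*y+b))" using Suc.prems
      by (simp add: DERIV_deriv_iff_real_differentiable smooth_differentiable)
    then have "((\<lambda>x. h (a * x + b)) has_real_derivative deriv h (a*y+b) * a) (at y)"
      by (auto intro!: derivative_eq_intros DERIV_chain2[where f=h])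
    then show "a * deriv h (a * y + b) = deriv (\<lambda>x. h (a * x + b)) y"
      by (simp add: DERIV_imp_deriv mult.commute)
  qed
  then have e: "deriv (\<lambda>x. h (a * x + b)) = (\<lambda>y. a * deriv h (a * y + b))" by (intro ext) simp
  have c: "Cn n UNIV (\<lambda>y. a * deriv h (a * y + b))"
    using Suc by (intro Cn_mult Cn_const) (auto simp: smooth_deriv)
  have d: "(\<lambda>x. h (a * x + b)) differentiable at x" for x
    using Suc.prems smooth_differentiable[of UNIV h "a*x+b"]
    by (auto intro!: diff_aff)
  show ?case unfolding Cn_Suc e using c d by blast
qed

lemma smooth_affine: "smooth_on UNIV h \<Longrightarrow> smooth_on UNIV (\<lambda>x. h (a * x + b))"
  by (simp add: smooth_Cn Cn_affine)

lemma polyexp_lim: "((\<lambda>t::real. poly p t * exp (- t)) \<longlongrightarrow> 0) at_top"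
proof -
  have "((\<lambda>t::real. \<Sum>i\<le>degree p. coeff p i * (t ^ i / exp t)) \<longlongrightarrow> (\<Sum>i\<le>degree p. coeff p i * 0)) at_top"
    by (intro tendsto_sum tendsto_mult tendsto_const tendsto_power_div_exp_0)
  moreover have "(\<lambda>t::real. \<Sum>i\<le>degree p. coeff p i * (t ^ i / exp t)) = (\<lambda>t. poly p t * exp (- t))"
    by (rule ext) (simp add: poly_altdef exp_minus sum_distrib_right divide_inverse mult.assoc)
  ultimately show ?thesis by simp
qed

definition G :: "real poly \<Rightarrow> real \<Rightarrow> real" where
  "G p x = (if x > 0 then poly p (inverse x) * exp (- inverse x) else 0)"

definition Gstep :: "real poly \<Rightarrow> real poly" where
  "Gstep p = pCons 0 (pCons 0 (p - pderiv p))"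

lemma G_deriv: "(G p has_real_derivative G (Gstep p) x) (at x)"
proof (cases "x > 0")
  case True
  have "((\<lambda>y. poly p (inverse y) * exp (- inverse y)) has_real_derivative
        poly (pderiv p) (inverse x) * (- (inverse x ^ 2)) * exp (- inverse x)
        + poly p (inverse x) * (exp (- inverse x) * (inverse x ^ 2))) (at x)"
    using True
    by (auto intro!: derivative_eq_intros DERIV_chain2[OF poly_DERIV] simp: power2_eq_square)
  moreover have "poly (pderiv p) (inverse x) * (- (inverse x ^ 2)) * exp (- inverse x)
        + poly p (inverse x) * (exp (- inverse x) * (inverse x ^ 2)) = G (Gstep p) x"
    using True by (simp add: G_def Gstep_def algebra_simps power2_eq_square)
  ultimately have "((\<lambda>y. poly p (inverse y) * exp (- inverse y)) has_real_derivative G (Gstep p) x) (at x)"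
    by simp
  then show ?thesis
    by (rule has_field_derivative_transform_within_open[where S="{0<..}"]) (use True in \<open>auto simp: G_def\<close>)
next
  case False
  show ?thesis
  proof (cases "x < 0")
    case True
    have "((\<lambda>y. 0) has_real_derivative 0) (at x)" by simp
    then have "(G p has_real_derivative 0) (at x)"
      by (rule has_field_derivative_transform_within_open[where S="{..<0}"]) (use True in \<open>auto simp: G_def\<close>)
    then show ?thesis using True by (simp add: G_def)
  next
    case False
    then have x0: "x = 0" using \<open>\<not> x > 0\<close> by simp
    have "((\<lambda>y. (G p y - G p 0) / (y - 0)) \<longlongrightarrow> 0) (at (0::real))"
    proof (rule filterlim_split_at)
      show "((\<lambda>y. (G p y - G p 0) / (y - 0)) \<longlongrightarrow> 0) (at_left (0::real))"
        by (rule tendsto_eventually) (simp add: eventually_at_filter G_def)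
    next
      have l: "((\<lambda>t. poly (pCons 0 p) t * exp (- t)) \<longlongrightarrow> 0) at_top" by (rule polyexp_lim)
      have "((\<lambda>y. poly (pCons 0 p) (inverse y) * exp (- inverse y)) \<longlongrightarrow> 0) (at_right (0::real))"
        by (rule filterlim_compose[OF l filterlim_inverse_at_top_right])
      moreover have "\<forall>\<^sub>F y in at_right (0::real). poly (pCons 0 p) (inverse y) * exp (- inverse y) = (G p y - G p 0) / (y - 0)"
        by (rule eventually_mono[OF eventually_at_right_less]) (simp add: G_def field_simps)
      ultimately show "((\<lambda>y. (G p y - G p 0) / (y - 0)) \<longlongrightarrow> 0) (at_right (0::real))"
        using tendsto_cong by force
    qed
    then have "(G p has_real_derivative 0) (at x)" using x0 by (simp add: has_field_derivative_iff)
    then show ?thesis using x0 by (simp add: G_def)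
  qed
qed

lemma deriv_G: "deriv (G p) = G (Gstep p)"
  by (rule ext) (rule DERIV_imp_deriv[OF G_deriv])

lemma derivn_G: "(deriv ^^ n) (G p) = G ((Gstep ^^ n) p)"
  by (induction n arbitrary: p) (simp_all add: funpow_Suc_right deriv_G del: funpow.simps)

lemma smooth_G: "smooth_on UNIV (G p)"
  unfolding smooth_on_def derivn_G real_differentiable_def using G_deriv by blast

definition Ef :: "real \<Rightarrow> real" where "Ef x = (if x > 0 then exp (- inverse x) else 0)"

lemma Ef_G: "Ef = G 1" by (rule ext) (simp add: Ef_def G_def)

lemma smooth_Ef: "smooth_on UNIV Ef" by (simp add: Ef_G smooth_G)

lemma Ef_pos: "x > 0 \<Longrightarrow> Ef x > 0" and Ef_nonneg: "Ef x \<ge> 0" and Ef_zero: "x \<le> 0 \<Longrightarrow> Ef x = 0"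
  by (auto simp: Ef_def)

definition chi :: "real \<Rightarrow> real" where
  "chi t = Ef (1 * t + (-1)) * inverse (Ef (1 * t + (-1)) + Ef ((-1) * t + 2))"

lemma chi_den: "Ef (1 * t + (-1)) + Ef ((-1) * t + 2) > 0"
proof (cases "t > 1")
  case True then show ?thesis using Ef_pos[of "t - 1"] Ef_nonneg[of "2 - t"] by simp
next
  case False then show ?thesis using Ef_pos[of "2 - t"] Ef_nonneg[of "t - 1"] by simp
qed

lemma smooth_chi: "smooth_on UNIV chi"
proof -
  have a: "smooth_on UNIV (\<lambda>t. Ef (1 * t + (-1)))" "smooth_on UNIV (\<lambda>t. Ef ((-1) * t + 2))"
    by (rule smooth_affine[OF smooth_Ef])+
  have "smooth_on UNIV (\<lambda>t. inverse (Ef (1 * t + (-1)) + Ef ((-1) * t + 2)))"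
    by (rule smooth_inverse) (use a chi_den in \<open>auto intro!: smooth_add simp: less_imp_neq[symmetric]\<close>)
  then show ?thesis unfolding chi_def[abs_def] using a by (intro smooth_mult) auto
qed

lemma chi_le1: "t \<le> 1 \<Longrightarrow> chi t = 0"
  by (simp add: chi_def Ef_zero)

lemma chi_ge2: "t \<ge> 2 \<Longrightarrow> chi t = 1"
  using chi_den[of t] by (simp add: chi_def Ef_zero)

lemma chi_bounds: "0 \<le> chi t" "chi t \<le> 1"
  using chi_den[of t] Ef_nonneg[of "t - 1"] Ef_nonneg[of "2 - t"]
  by (auto simp: chi_def field_simps)

lemma chi_deriv1: "(chi has_real_derivative deriv chi t) (at t)"
  using smooth_differentiable[OF smooth_chi, of t] by (simp add: DERIV_deriv_iff_real_differentiable)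

lemma chi_deriv2: "(deriv chi has_real_derivative deriv (deriv chi) t) (at t)"
  using smooth_differentiable[OF smooth_deriv[OF smooth_chi], of t] by (simp add: DERIV_deriv_iff_real_differentiable)

lemma chi_cont0: "continuous_on UNIV chi"
  by (rule continuous_at_imp_continuous_on) (auto intro: DERIV_isCont chi_deriv1)
lemma chi_cont1: "continuous_on UNIV (deriv chi)"
  by (rule continuous_at_imp_continuous_on) (auto intro: DERIV_isCont chi_deriv2)
lemma chi_cont2: "continuous_on UNIV (deriv (deriv chi))"
  by (rule continuous_at_imp_continuous_on)
     (auto intro: differentiable_imp_continuous_within smooth_differentiable[OF smooth_deriv[OF smooth_deriv[OF smooth_chi]]])

lemma chi_out:
  assumes "t < 1 \<or> t > 2"
  shows "deriv chi t = 0" "deriv (deriv chi) t = 0"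
proof -
  define S where "S = (if t < 1 then {..<1} else {(2::real)<..})"
  define c where "c = (if t < 1 then 0 else (1::real))"
  have S: "open S" "t \<in> S" using assms by (auto simp: S_def)
  have eq: "\<And>y. y \<in> S \<Longrightarrow> chi y = c"
    using assms by (auto simp: S_def c_def chi_le1 chi_ge2 split: if_splits)
  have d1: "\<And>y. y \<in> S \<Longrightarrow> deriv chi y = 0"
    using deriv_local[OF S(1) _ eq] by simp
  show "deriv chi t = 0" using d1 S by blast
  show "deriv (deriv chi) t = 0"
    using deriv_local[OF S(1) S(2) d1] by simp
qed

lemma chi_dbound: "\<exists>C>0. \<forall>t. \<bar>deriv chi t\<bar> \<le> C \<and> \<bar>deriv (deriv chi) t\<bar> \<le> C"
proof -
  have "compact (deriv chi ` {1..2})" "compact (deriv (deriv chi) ` {1..2})"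
    by (intro compact_continuous_image continuous_on_subset[OF chi_cont1] continuous_on_subset[OF chi_cont2]; simp)+
  then have "bounded (deriv chi ` {1..2})" "bounded (deriv (deriv chi) ` {1..2})"
    by (auto intro: compact_imp_bounded)
  then obtain a b where a0: "\<forall>y\<in>deriv chi ` {1..2}. \<bar>y\<bar> \<le> a" and b0: "\<forall>y\<in>deriv (deriv chi) ` {1..2}. \<bar>y\<bar> \<le> b"
    unfolding bounded_real by blast
  have a: "\<forall>x\<in>{1..2}. \<bar>deriv chi x\<bar> \<le> a" using a0 by blast
  have b: "\<forall>x\<in>{1..2}. \<bar>deriv (deriv chi) x\<bar> \<le> b" using b0 by blast
  show ?thesis
  proof (intro exI[of _ "max 1 (max a b)"] conjI allI)
    fix t
    show "\<bar>deriv chi t\<bar> \<le> max 1 (max a b)" "\<bar>deriv (deriv chi) t\<bar> \<le> max 1 (max a b)"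
    proof -
      show "\<bar>deriv chi t\<bar> \<le> max 1 (max a b)"
      proof (cases "t < 1 \<or> t > 2")
        case True then show ?thesis using chi_out(1)[of t] by simp
      next
        case False then have "t \<in> {1..2}" by auto
        then show ?thesis using a by fastforce
      qed
      show "\<bar>deriv (deriv chi) t\<bar> \<le> max 1 (max a b)"
      proof (cases "t < 1 \<or> t > 2")
        case True then show ?thesis using chi_out(2)[of t] by simp
      next
        case False then have "t \<in> {1..2}" by auto
        then show ?thesis using b by fastforce
      qed
    qed
  qed simp
qed

lemma meas_pos:
  fixes F :: "real \<Rightarrow> real"
  assumes "continuous_on {0<..} F"
  shows "(\<lambda>x. ennreal (F x) * indicator {0<..} x) \<in> borel_measurable lborel"
proof -
  have "(\<lambda>x. indicator {0<..} x *\<^sub>R F x) \<in> borel_measurable borel"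
    by (rule borel_measurable_continuous_on_indicator) (use assms in auto)
  then have m: "(\<lambda>x. ennreal (indicator {0<..} x *\<^sub>R F x)) \<in> borel_measurable lborel"
    by measurable
  have "(\<lambda>x. ennreal (indicator {0<..} x *\<^sub>R F x)) = (\<lambda>x. ennreal (F x) * indicator {0<..} x)"
    by (rule ext) (simp add: indicator_def)
  then show ?thesis using m by simp
qed

lemma tail0:
  fixes P :: "real \<Rightarrow> ennreal"
  assumes m: "P \<in> borel_measurable lborel" and fin: "(\<integral>\<^sup>+x. P x \<partial>lborel) < \<infinity>"
    and z: "\<And>x. x \<le> 0 \<Longrightarrow> P x = 0" and s: "s > 0"
  shows "\<exists>d>0. (\<integral>\<^sup>+x. P x * indicator {..d} x \<partial>lborel) < s"
proof -
  define f where "f i x = P x * indicator {..1 / Suc i} x" for i :: nat and x :: real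
  have dec: "decseq f"
  proof (intro decseq_SucI le_funI)
    fix i x
    show "f (Suc i) x \<le> f i x"
    proof (cases "x \<le> 1 / Suc (Suc i)")
      case True
      have "1 / real (Suc (Suc i)) \<le> 1 / Suc i" by (intro divide_left_mono) auto
      then show ?thesis using True by (simp add: f_def)
    next
      case False then show ?thesis by (simp add: f_def)
    qed
  qed
  have mf: "\<And>i. f i \<in> borel_measurable lborel" unfolding f_def using m by measurable
  have ff: "(\<integral>\<^sup>+ x. f i x \<partial>lborel) < \<infinity>" for i
    using fin by (rule le_less_trans[rotated]) (auto intro!: nn_integral_mono simp: f_def indicator_def)
  have inf0: "(INF i. f i x) = 0" for x
  proof (cases "x > 0")
    case True
    obtain n :: nat where "1 / Suc n < x" using True
      by (metis nat_approx_posE)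
    then have "f n x = 0" by (simp add: f_def)
    then show ?thesis by (metis (mono_tags) INF_lower UNIV_I bot.extremum_uniqueI bot_ennreal)
  next
    case False then show ?thesis by (simp add: f_def z)
  qed
  have "(INF i. integral\<^sup>N lborel (f i)) = 0"
    using nn_integral_monotone_convergence_INF_decseq[OF dec mf ff] inf0 by simp
  then obtain i where "(\<integral>\<^sup>+x. f i x \<partial>lborel) < s" using s by (metis INF_less_iff)
  then have "(\<integral>\<^sup>+x. P x * indicator {..1 / Suc i} x \<partial>lborel) < s" unfolding f_def .
  then show ?thesis by (intro exI[of _ "1 / Suc i"]) auto
qed

lemma tailinf:
  fixes P :: "real \<Rightarrow> ennreal"
  assumes m: "P \<in> borel_measurable lborel" and fin: "(\<integral>\<^sup>+x. P x \<partial>lborel) < \<infinity>"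
    and s: "s > 0"
  shows "\<exists>R. (\<integral>\<^sup>+x. P x * indicator {R..} x \<partial>lborel) < s"
proof -
  define f where "f i x = P x * indicator {real i..} x" for i :: nat and x :: real
  have dec: "decseq f"
  proof (intro decseq_SucI le_funI)
    fix i x
    show "f (Suc i) x \<le> f i x"
      by (cases "real (Suc i) \<le> x") (auto simp: f_def)
  qed
  have mf: "\<And>i. f i \<in> borel_measurable lborel" unfolding f_def using m by measurable
  have ff: "(\<integral>\<^sup>+ x. f i x \<partial>lborel) < \<infinity>" for i
    using fin by (rule le_less_trans[rotated]) (auto intro!: nn_integral_mono simp: f_def indicator_def)
  have inf0: "(INF i. f i x) = 0" for x
  proof -
    obtain n :: nat where "x < real n" using reals_Archimedean2 by blast
    then have "f n x = 0" by (simp add: f_def)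
    then show ?thesis by (metis (mono_tags) INF_lower UNIV_I bot.extremum_uniqueI bot_ennreal)
  qed
  have "(INF i. integral\<^sup>N lborel (f i)) = 0"
    using nn_integral_monotone_convergence_INF_decseq[OF dec mf ff] inf0 by simp
  then obtain i where "(\<integral>\<^sup>+x. f i x \<partial>lborel) < s" using s by (metis INF_less_iff)
  then have "(\<integral>\<^sup>+x. P x * indicator {real i..} x \<partial>lborel) < s" unfolding f_def .
  then show ?thesis by blast
qed

lemma sq3: "((a::real) + b + d)\<^sup>2 \<le> 3 * (a\<^sup>2 + b\<^sup>2 + d\<^sup>2)"
proof -
  have "0 \<le> (a - b)\<^sup>2 + (b - d)\<^sup>2 + (a - d)\<^sup>2" by simp
  then show ?thesis by (simp add: power2_eq_square algebra_simps)
qed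

lemma sq2: "((a::real) + b)\<^sup>2 \<le> 2 * (a\<^sup>2 + b\<^sup>2)"
proof -
  have "0 \<le> (a - b)\<^sup>2" by simp
  then show ?thesis by (simp add: power2_eq_square algebra_simps)
qed

lemma pw_gen:
  fixes G0 G1 G2 c c1 c2 w0 w1 w2 :: real
  assumes c: "c\<^sup>2 \<le> 1" and w: "w0 \<ge> 0" "w1 \<ge> 0" "w2 \<ge> 0"
  shows "4 * ((G2*c + G1*c1 + (G1*c1 + G0*c2))\<^sup>2 * w2) + (G1*c + G0*c1)\<^sup>2 * w1 + (G0*c)\<^sup>2 * w0
   \<le> (12*(G2\<^sup>2*w2) + 2*(G1\<^sup>2*w1) + G0\<^sup>2*w0) + (48*(G1\<^sup>2*c1\<^sup>2*w2) + 12*(G0\<^sup>2*c2\<^sup>2*w2) + 2*(G0\<^sup>2*c1\<^sup>2*w1))"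
proof -
  have a: "(G2*c)\<^sup>2 \<le> G2\<^sup>2" "(G1*c)\<^sup>2 \<le> G1\<^sup>2" "(G0*c)\<^sup>2 \<le> G0\<^sup>2"
    using c by (simp_all add: power_mult_distrib mult_left_le)
  have e2: "(G2*c + G1*c1 + (G1*c1 + G0*c2))\<^sup>2 \<le> 3 * ((G2*c)\<^sup>2 + 4*(G1\<^sup>2*c1\<^sup>2) + G0\<^sup>2*c2\<^sup>2)"
    using sq3[of "G2*c" "2*G1*c1" "G0*c2"] by (simp add: power_mult_distrib algebra_simps)
  have e2': "(G2*c + G1*c1 + (G1*c1 + G0*c2))\<^sup>2 \<le> 3 * G2\<^sup>2 + 12*(G1\<^sup>2*c1\<^sup>2) + 3*(G0\<^sup>2*c2\<^sup>2)"
    using e2 a(1) by (smt (verit))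
  have e1: "(G1*c + G0*c1)\<^sup>2 \<le> 2 * G1\<^sup>2 + 2*(G0\<^sup>2*c1\<^sup>2)"
    using sq2[of "G1*c" "G0*c1"] a by (simp add: power_mult_distrib)
  have t2: "(G2*c + G1*c1 + (G1*c1 + G0*c2))\<^sup>2 * w2 \<le> (3 * G2\<^sup>2 + 12*(G1\<^sup>2*c1\<^sup>2) + 3*(G0\<^sup>2*c2\<^sup>2)) * w2"
    by (rule mult_right_mono[OF e2' w(3)])
  have t1: "(G1*c + G0*c1)\<^sup>2 * w1 \<le> (2 * G1\<^sup>2 + 2*(G0\<^sup>2*c1\<^sup>2)) * w1"
    by (rule mult_right_mono[OF e1 w(2)])
  have t0: "(G0*c)\<^sup>2 * w0 \<le> G0\<^sup>2 * w0"
    by (rule mult_right_mono[OF a(3) w(1)])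
  show ?thesis using t2 t1 t0 by (simp add: algebra_simps)
qed

lemma mult3_mono:
  fixes a b c A B C :: real
  assumes "0 \<le> a" "a \<le> A" "0 \<le> b" "b \<le> B" "0 \<le> c" "c \<le> C"
  shows "a * b * c \<le> A * B * C"
proof -
  have "a * b \<le> A * B" using assms by (intro mult_mono) auto
  then show ?thesis using assms by (intro mult_mono) auto
qed

lemma scaled_deriv:
  fixes f :: "real \<Rightarrow> real" and a :: real
  assumes "\<And>t. (f has_real_derivative f' t) (at t)"
  shows "((\<lambda>x. f (x / a)) has_real_derivative f' (x / a) / a) (at x)"
proof -
  have "((\<lambda>x. x / a) has_real_derivative 1 / a) (at x)"
    using DERIV_cdivide[OF DERIV_ident, of a x] by simp
  from DERIV_chain2[OF assms this] show ?thesis by simp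
qed

lemma scaled_cont:
  fixes f :: "real \<Rightarrow> real" and a :: real and S :: "real set"
  assumes "continuous_on UNIV f"
  shows "continuous_on S (\<lambda>x. f (x / a))"
proof (rule continuous_on_compose2[OF assms])
  have "continuous_on S (\<lambda>x. x * inverse a)"
    by (intro continuous_on_mult_right continuous_on_id)
  then show "continuous_on S (\<lambda>x. x / a)" by (simp add: divide_inverse)
qed auto

lemma split3:
  assumes [measurable]: "a2 \<in> borel_measurable lborel" "a1 \<in> borel_measurable lborel" "a0 \<in> borel_measurable lborel"
  shows "4 * integral\<^sup>N lborel a2 + integral\<^sup>N lborel a1 + integral\<^sup>N lborel a0
    = (\<integral>\<^sup>+x. 4 * a2 x + a1 x + a0 x \<partial>lborel)"
  by (simp add: nn_integral_add nn_integral_cmult)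

lemma ennreal_comb:
  fixes A B C :: real and i :: ennreal
  assumes "0 \<le> A" "0 \<le> B" "0 \<le> C"
  shows "4 * (ennreal A * i) + ennreal B * i + ennreal C * i = ennreal (4 * A + B + C) * i"
proof -
  have "ennreal (4 * A + B + C) = 4 * ennreal A + ennreal B + ennreal C"
  proof -
    have "ennreal (4 * A + B + C) = ennreal (4 * A) + ennreal B + ennreal C"
      using assms by (subst ennreal_plus; simp)+
    moreover have "ennreal (4 * A) = 4 * ennreal A" using assms by (simp add: ennreal_mult)
    ultimately show ?thesis by simp
  qed
  then show ?thesis by (simp add: distrib_right mult.assoc)
qed

lemma chi_lo: "u < 1 \<Longrightarrow> chi u = 0 \<and> deriv chi u = 0 \<and> deriv (deriv chi) u = 0"
  using chi_le1[of u] chi_out[of u] by simp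
lemma chi_hi: "u > 2 \<Longrightarrow> chi u = 1 \<and> deriv chi u = 0 \<and> deriv (deriv chi) u = 0"
  using chi_ge2[of u] chi_out[of u] by simp

lemma sq_bound: "\<bar>a::real\<bar> \<le> C \<Longrightarrow> a\<^sup>2 \<le> C\<^sup>2"
  by (metis abs_ge_zero power2_abs power_mono)

lemma pointwise:
  fixes g g1 g2 :: "real \<Rightarrow> real" and \<mu> d R C M2 \<eta> x :: real
  assumes x: "x > 0" and d: "d > 0" "2 * d \<le> 1" "2 * d < R" and R: "R \<ge> 1"
    and mu: "\<mu> > 2"
    and C: "\<And>u. \<bar>deriv chi u\<bar> \<le> C \<and> \<bar>deriv (deriv chi) u\<bar> \<le> C"
    and small: "\<And>y. 0 < y \<Longrightarrow> y \<le> 2 * d \<Longrightarrow> (g y)\<^sup>2 \<le> M2 \<and> (g1 y)\<^sup>2 \<le> M2"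
    and large: "\<And>y. R \<le> y \<Longrightarrow> y powr (\<mu> + 1) * (g1 y)\<^sup>2 \<le> \<eta> \<and> y powr \<mu> * (g y)\<^sup>2 \<le> \<eta>"
  defines "c \<equiv> 1 - chi (x / d) + chi (x / R)"
    and "c1 \<equiv> - (deriv chi (x / d) / d) + deriv chi (x / R) / R"
    and "c2 \<equiv> - (deriv (deriv chi) (x / d) / d / d) + deriv (deriv chi) (x / R) / R / R"
    and "H \<equiv> 12 * ((g2 x)\<^sup>2 * x powr (\<mu> + 1)) + 2 * ((g1 x)\<^sup>2 * ((x + 1) * x powr \<mu>)) + (g x)\<^sup>2 * x powr (\<mu> - 1)"
    and "K1 \<equiv> 48 * (M2 * (C\<^sup>2 / d\<^sup>2) * ((2*d) powr (\<mu> - 2) * (2*d)^3))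
             + 12 * (M2 * (C\<^sup>2 / d\<^sup>2 / d\<^sup>2) * ((2*d) powr (\<mu> - 2) * (2*d)^3))
             + 2 * (M2 * (C\<^sup>2 / d\<^sup>2) * (2 * ((2*d) powr (\<mu> - 2) * (2*d)^2)))"
    and "K2 \<equiv> 48 * ((C\<^sup>2 / R\<^sup>2) * \<eta>) + 12 * ((C\<^sup>2 / R\<^sup>2 / R\<^sup>2) * (2 * R) * \<eta>) + 2 * ((C\<^sup>2 / R\<^sup>2) * (2 * R + 1) * \<eta>)"
  shows "4 * ((g2 x * c + g1 x * c1 + (g1 x * c1 + g x * c2))\<^sup>2 * x powr (\<mu> + 1))
      + (g1 x * c + g x * c1)\<^sup>2 * ((x + 1) * x powr \<mu>) + (g x * c)\<^sup>2 * x powr (\<mu> - 1)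
    \<le> (if x \<le> 2 * d \<or> R \<le> x then H else 0) + (if d \<le> x \<and> x \<le> 2 * d then K1 else 0)
      + (if R \<le> x \<and> x \<le> 2 * R then K2 else 0)"
proof -
  let ?L = "4 * ((g2 x * c + g1 x * c1 + (g1 x * c1 + g x * c2))\<^sup>2 * x powr (\<mu> + 1))
      + (g1 x * c + g x * c1)\<^sup>2 * ((x + 1) * x powr \<mu>) + (g x * c)\<^sup>2 * x powr (\<mu> - 1)"
  let ?X = "48*((g1 x)\<^sup>2*c1\<^sup>2*x powr (\<mu> + 1)) + 12*((g x)\<^sup>2*c2\<^sup>2*x powr (\<mu> + 1)) + 2*((g x)\<^sup>2*c1\<^sup>2*((x + 1) * x powr \<mu>))"
  have w: "x powr (\<mu> - 1) \<ge> 0" "(x + 1) * x powr \<mu> \<ge> 0" "x powr (\<mu> + 1) \<ge> 0" using x by auto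
  have gen: "c\<^sup>2 \<le> 1 \<Longrightarrow> ?L \<le> H + ?X"
    unfolding H_def using pw_gen[OF _ w, of c "g2 x" "g1 x" c1 "g x" c2] by simp
  have Rd: "R > d" "R > 2 * d" using d by auto
  consider (A) "x < d" | (B) "d \<le> x" "x \<le> 2 * d" | (Cc) "2 * d < x" "x < R" | (D) "R \<le> x" "x \<le> 2 * R" | (E) "2 * R < x"
    by linarith
  then show ?thesis
  proof cases
    case A
    have "x / d < 1" "x / R < 1" using A x d Rd by (auto simp: divide_less_eq)
    then have "c = 1" "c1 = 0" "c2 = 0" using chi_lo unfolding c_def c1_def c2_def by auto
    then have "?L \<le> H" using gen by simp
    then show ?thesis using A d Rd by auto
  next
    case B
    have "x / R < 1" using B x d Rd by (auto simp: divide_less_eq)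
    then have cs: "c = 1 - chi (x / d)" "c1 = - (deriv chi (x / d) / d)" "c2 = - (deriv (deriv chi) (x / d) / d / d)"
      using chi_lo unfolding c_def c1_def c2_def by auto
    have "c\<^sup>2 \<le> 1" unfolding cs using chi_bounds[of "x/d"] by (intro power_le_one) auto
    then have L: "?L \<le> H + ?X" by (rule gen)
    define p where "p = (2*d) powr (\<mu> - 2)"
    have p: "p \<ge> 0" unfolding p_def by simp
    have sm: "(g x)\<^sup>2 \<le> M2" "(g1 x)\<^sup>2 \<le> M2" using small[of x] B x by auto
    have c1b: "c1\<^sup>2 \<le> C\<^sup>2 / d\<^sup>2"
      unfolding cs using sq_bound[OF conjunct1[OF C[of "x/d"]]] d by (simp add: power_divide divide_right_mono)
    have c2b: "c2\<^sup>2 \<le> C\<^sup>2 / d\<^sup>2 / d\<^sup>2"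
    proof -
      have "c2\<^sup>2 = (deriv (deriv chi) (x / d))\<^sup>2 / (d\<^sup>2 * d\<^sup>2)" unfolding cs by (simp add: power_divide power_mult_distrib)
      also have "\<dots> \<le> C\<^sup>2 / (d\<^sup>2 * d\<^sup>2)"
        using sq_bound[OF conjunct2[OF C[of "x/d"]]] d by (intro divide_right_mono) auto
      finally show ?thesis by simp
    qed
    have pw: "(2*d) powr (\<mu> + 1) = p * (2*d)^3"
    proof -
      have "(2*d) powr (\<mu> + 1) = (2*d) powr ((\<mu> - 2) + 3)" by (simp add: add.commute)
      also have "\<dots> = (2*d) powr (\<mu> - 2) * (2*d) powr 3" by (rule powr_add)
      finally have "(2*d) powr (\<mu> + 1) = (2*d) powr (\<mu> - 2) * (2*d) powr 3" .
      then show ?thesis using d by (simp add: p_def)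
    qed
    have pw': "(2*d) powr \<mu> = p * (2*d)^2"
    proof -
      have "(2*d) powr \<mu> = (2*d) powr ((\<mu> - 2) + 2)" by simp
      also have "\<dots> = (2*d) powr (\<mu> - 2) * (2*d) powr 2" by (rule powr_add)
      finally have "(2*d) powr \<mu> = (2*d) powr (\<mu> - 2) * (2*d) powr 2" .
      then show ?thesis using d by (simp add: p_def)
    qed
    have w2: "x powr (\<mu> + 1) \<le> p * (2*d)^3"
      using powr_mono2[of "\<mu> + 1" x "2*d"] mu x B pw by simp
    have w1: "(x + 1) * x powr \<mu> \<le> 2 * (p * (2*d)^2)"
    proof -
      have "x powr \<mu> \<le> p * (2*d)^2" using powr_mono2[of "\<mu>" x "2*d"] mu x B pw' by simp
      moreover have "x + 1 \<le> 2" using B d by simp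
      ultimately show ?thesis using x by (intro mult_mono) auto
    qed
    have X1: "(g1 x)\<^sup>2*c1\<^sup>2*x powr (\<mu> + 1) \<le> M2 * (C\<^sup>2 / d\<^sup>2) * (p * (2*d)^3)"
      by (rule mult3_mono) (use sm c1b w2 in auto)
    have X2: "(g x)\<^sup>2*c2\<^sup>2*x powr (\<mu> + 1) \<le> M2 * (C\<^sup>2 / d\<^sup>2 / d\<^sup>2) * (p * (2*d)^3)"
      by (rule mult3_mono) (use sm c2b w2 in auto)
    have X3: "(g x)\<^sup>2*c1\<^sup>2*((x + 1) * x powr \<mu>) \<le> M2 * (C\<^sup>2 / d\<^sup>2) * (2 * (p * (2*d)^2))"
      by (rule mult3_mono) (use sm c1b w1 x in auto)
    have "?X \<le> K1" unfolding K1_def p_def[symmetric] using X1 X2 X3 by linarith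
    then show ?thesis using L B Rd by auto
  next
    case Cc
    have "x / d > 2" "x / R < 1" using Cc x d Rd by (auto simp: divide_less_eq less_divide_eq)
    then have "c = 0" "c1 = 0" "c2 = 0" using chi_lo chi_hi unfolding c_def c1_def c2_def by auto
    then show ?thesis using Cc by auto
  next
    case D
    have "x / d > 2" using D x d Rd by (auto simp: less_divide_eq)
    then have cs: "c = chi (x / R)" "c1 = deriv chi (x / R) / R" "c2 = deriv (deriv chi) (x / R) / R / R"
      using chi_hi unfolding c_def c1_def c2_def by auto
    have "c\<^sup>2 \<le> 1" unfolding cs using chi_bounds[of "x/R"] by (intro power_le_one) auto
    then have L: "?L \<le> H + ?X" by (rule gen)
    have lg: "x powr (\<mu> + 1) * (g1 x)\<^sup>2 \<le> \<eta>" "x powr \<mu> * (g x)\<^sup>2 \<le> \<eta>" using large[of x] D by auto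
    have c1b: "c1\<^sup>2 \<le> C\<^sup>2 / R\<^sup>2"
      unfolding cs using sq_bound[OF conjunct1[OF C[of "x/R"]]] R by (simp add: power_divide divide_right_mono)
    have c2b: "c2\<^sup>2 \<le> C\<^sup>2 / R\<^sup>2 / R\<^sup>2"
    proof -
      have "c2\<^sup>2 = (deriv (deriv chi) (x / R))\<^sup>2 / (R\<^sup>2 * R\<^sup>2)" unfolding cs by (simp add: power_divide power_mult_distrib)
      also have "\<dots> \<le> C\<^sup>2 / (R\<^sup>2 * R\<^sup>2)"
        using sq_bound[OF conjunct2[OF C[of "x/R"]]] R by (intro divide_right_mono) auto
      finally show ?thesis by simp
    qed
    have xp: "x powr (\<mu> + 1) = x * x powr \<mu>" using x by (simp add: powr_add)
    have X1: "(g1 x)\<^sup>2*c1\<^sup>2*x powr (\<mu> + 1) \<le> (C\<^sup>2 / R\<^sup>2) * \<eta>"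
    proof -
      have "(g1 x)\<^sup>2*c1\<^sup>2*x powr (\<mu> + 1) = c1\<^sup>2 * (x powr (\<mu> + 1) * (g1 x)\<^sup>2)" by (simp add: algebra_simps)
      also have "\<dots> \<le> (C\<^sup>2 / R\<^sup>2) * \<eta>" using c1b lg(1) x by (intro mult_mono) auto
      finally show ?thesis .
    qed
    have X2: "(g x)\<^sup>2*c2\<^sup>2*x powr (\<mu> + 1) \<le> (C\<^sup>2 / R\<^sup>2 / R\<^sup>2) * (2 * R) * \<eta>"
    proof -
      have "(g x)\<^sup>2*c2\<^sup>2*x powr (\<mu> + 1) = c2\<^sup>2 * x * (x powr \<mu> * (g x)\<^sup>2)" unfolding xp by (simp add: algebra_simps)
      also have "\<dots> \<le> (C\<^sup>2 / R\<^sup>2 / R\<^sup>2) * (2 * R) * \<eta>" using c2b lg(2) x D by (intro mult3_mono) auto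
      finally show ?thesis .
    qed
    have X3: "(g x)\<^sup>2*c1\<^sup>2*((x + 1) * x powr \<mu>) \<le> (C\<^sup>2 / R\<^sup>2) * (2 * R + 1) * \<eta>"
    proof -
      have "(g x)\<^sup>2*c1\<^sup>2*((x + 1) * x powr \<mu>) = c1\<^sup>2 * (x + 1) * (x powr \<mu> * (g x)\<^sup>2)" by (simp add: algebra_simps)
      also have "\<dots> \<le> (C\<^sup>2 / R\<^sup>2) * (2 * R + 1) * \<eta>" using c1b lg(2) x D by (intro mult3_mono) auto
      finally show ?thesis .
    qed
    have "?X \<le> K2" unfolding K2_def using X1 X2 X3 by linarith
    then show ?thesis using L D Rd by auto
  next
    case E
    have "x / d > 2" "x / R > 2" using E x d Rd by (auto simp: less_divide_eq)
    then have "c = 1" "c1 = 0" "c2 = 0" using chi_hi unfolding c_def c1_def c2_def by auto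
    then have "?L \<le> H" using gen by simp
    then show ?thesis using E d Rd by auto
  qed
qed

lemma smooth_chi_scaled: "smooth_on UNIV (\<lambda>x. chi (x / a))"
proof -
  have "smooth_on UNIV (\<lambda>x. chi (inverse a * x + 0))" by (rule smooth_affine[OF smooth_chi])
  then show ?thesis by (simp add: divide_inverse mult.commute)
qed

lemma lin3: "0 \<le> (b::real) \<Longrightarrow> 0 \<le> c \<Longrightarrow> 12 * a + 2 * b + c \<le> 3 * (4 * a + b + c)"
  by (simp add: algebra_simps)

theorem lemma3:
  fixes \<mu> :: real and g :: "real \<Rightarrow> real" and \<epsilon> :: real
  assumes "\<mu> > 2"
    and "Cinf_mu \<mu> g" and "D_norm_sq \<mu> g < \<infinity>"
    and "\<epsilon> > 0"
  shows "\<exists>\<phi>. Cc_inf \<phi> \<and> D_norm_sq \<mu> (\<lambda>x. g x - \<phi> x) < ennreal (\<epsilon>\<^sup>2)"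
proof -
  note mu = assms(1)
  from assms(2) have sm: "smooth_on {0<..} g"
    and ls: "Limsup (at_right 0) (\<lambda>x. ereal (\<bar>g x\<bar> + \<bar>deriv g x\<bar>)) < \<infinity>"
    and dec: "((\<lambda>x. x powr (\<mu> + 1) * (deriv g x)\<^sup>2 + x powr \<mu> * (g x)\<^sup>2) \<longlongrightarrow> 0) at_top"
    by (auto simp: Cinf_mu_def)
  have sm1: "smooth_on {0<..} (deriv g)" by (rule smooth_deriv[OF sm])
  have sm2: "smooth_on {0<..} (deriv (deriv g))" by (rule smooth_deriv[OF sm1])
  have dg: "(g has_real_derivative deriv g x) (at x)" if "x > 0" for x
    using smooth_differentiable[OF sm, of x] that by (simp add: DERIV_deriv_iff_real_differentiable)
  have dg1: "(deriv g has_real_derivative deriv (deriv g) x) (at x)" if "x > 0" for x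
    using smooth_differentiable[OF sm1, of x] that by (simp add: DERIV_deriv_iff_real_differentiable)
  have cg: "continuous_on {0<..} g"
    by (rule continuous_at_imp_continuous_on) (auto intro: DERIV_isCont dg)
  have cg1: "continuous_on {0<..} (deriv g)"
    by (rule continuous_at_imp_continuous_on) (auto intro: DERIV_isCont dg1)
  have cg2: "continuous_on {0<..} (deriv (deriv g))"
    by (rule continuous_at_imp_continuous_on)
       (auto intro: differentiable_imp_continuous_within smooth_differentiable[OF sm2])
  obtain C where C0: "C > 0" and C: "\<And>u. \<bar>deriv chi u\<bar> \<le> C \<and> \<bar>deriv (deriv chi) u\<bar> \<le> C"
    using chi_dbound by blast

  define H where "H x = 12 * ((deriv (deriv g) x)\<^sup>2 * x powr (\<mu> + 1)) + 2 * ((deriv g x)\<^sup>2 * ((x + 1) * x powr \<mu>)) + (g x)\<^sup>2 * x powr (\<mu> - 1)" for x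
  define P where "P x = ennreal (H x) * indicator {0<..} x" for x
  define f2 where "f2 x = ennreal ((deriv (deriv g) x)\<^sup>2 * x powr (\<mu> + 1)) * indicator {0<..} x" for x
  define f1 where "f1 x = ennreal ((deriv g x)\<^sup>2 * (x + 1) * x powr \<mu>) * indicator {0<..} x" for x
  define f0 where "f0 x = ennreal ((g x)\<^sup>2 * x powr (\<mu> - 1)) * indicator {0<..} x" for x
  have cH: "continuous_on {0<..} H" unfolding H_def[abs_def]
    by (intro continuous_intros cg cg1 cg2) auto
  have mP: "P \<in> borel_measurable lborel" unfolding P_def[abs_def] by (rule meas_pos[OF cH])
  have mf2: "f2 \<in> borel_measurable lborel" unfolding f2_def[abs_def]
    by (rule meas_pos) (intro continuous_intros cg cg1 cg2; auto)
  have mf1: "f1 \<in> borel_measurable lborel" unfolding f1_def[abs_def]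
    by (rule meas_pos) (intro continuous_intros cg cg1 cg2; auto)
  have mf0: "f0 \<in> borel_measurable lborel" unfolding f0_def[abs_def]
    by (rule meas_pos) (intro continuous_intros cg cg1 cg2; auto)
  have Dg: "D_norm_sq \<mu> g = (\<integral>\<^sup>+x. 4 * f2 x + f1 x + f0 x \<partial>lborel)"
    unfolding D_norm_sq_def f2_def[symmetric] f1_def[symmetric] f0_def[symmetric]
    by (rule split3[OF mf2 mf1 mf0])
  have finP: "(\<integral>\<^sup>+x. P x \<partial>lborel) < \<infinity>"
  proof -
    have "(\<integral>\<^sup>+x. P x \<partial>lborel) \<le> (\<integral>\<^sup>+x. 3 * (4 * f2 x + f1 x + f0 x) \<partial>lborel)"
    proof (rule nn_integral_mono)
      fix x
      show "P x \<le> 3 * (4 * f2 x + f1 x + f0 x)"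
      proof (cases "x > 0")
        case True
        let ?A = "(deriv (deriv g) x)\<^sup>2 * x powr (\<mu> + 1)"
        let ?B = "(deriv g x)\<^sup>2 * (x + 1) * x powr \<mu>"
        let ?C = "(g x)\<^sup>2 * x powr (\<mu> - 1)"
        have nn: "0 \<le> ?A" "0 \<le> ?B" "0 \<le> ?C" using True by auto
        have "4 * f2 x + f1 x + f0 x = ennreal (4 * ?A + ?B + ?C) * indicator {0<..} x"
          unfolding f2_def f1_def f0_def by (rule ennreal_comb[OF nn])
        also have "\<dots> = ennreal (4 * ?A + ?B + ?C)" using True by simp
        finally have e: "3 * (4 * f2 x + f1 x + f0 x) = ennreal (3 * (4 * ?A + ?B + ?C))"
          using nn by (simp add: ennreal_mult)
        have eqB: "(deriv g x)\<^sup>2 * ((x + 1) * x powr \<mu>) = ?B" by (simp add: mult.assoc)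
        have "H x \<le> 3 * (4 * ?A + ?B + ?C)" unfolding H_def eqB by (rule lin3[OF nn(2,3)])
        then have hle: "ennreal (H x) \<le> ennreal (3 * (4 * ?A + ?B + ?C))" by (rule ennreal_leI)
        have "P x = ennreal (H x)" using True by (simp add: P_def)
        then show ?thesis unfolding e by (simp only: hle)
      qed (simp add: P_def)
    qed
    also have "\<dots> = 3 * D_norm_sq \<mu> g"
    proof -
      have [measurable]: "f2 \<in> borel_measurable borel" "f1 \<in> borel_measurable borel" "f0 \<in> borel_measurable borel"
        using mf2 mf1 mf0 by simp_all
      show ?thesis unfolding Dg by (intro nn_integral_cmult) (simp, measurable)
    qed
    also have "\<dots> < \<infinity>" using assms(3) by (simp add: ennreal_mult_less_top)
    finally show ?thesis .
  qed

  define s where "s = \<epsilon>\<^sup>2 / 8"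
  have s0: "s > 0" using assms(4) by (simp add: s_def)
  have Pz: "\<And>x. x \<le> 0 \<Longrightarrow> P x = 0" by (simp add: P_def)
  obtain d0 where d0: "d0 > 0" and td0: "(\<integral>\<^sup>+x. P x * indicator {..d0} x \<partial>lborel) < ennreal s"
    using tail0[OF mP finP Pz, of "ennreal s"] s0 by auto
  obtain R1 where tR1: "(\<integral>\<^sup>+x. P x * indicator {R1..} x \<partial>lborel) < ennreal s"
    using tailinf[OF mP finP, of "ennreal s"] s0 by auto
  obtain n :: nat where "Limsup (at_right 0) (\<lambda>x. ereal (\<bar>g x\<bar> + \<bar>deriv g x\<bar>)) < ereal (real n)"
    using ls less_PInf_Ex_of_nat by auto
  then have "\<forall>\<^sub>F x in at_right 0. ereal (\<bar>g x\<bar> + \<bar>deriv g x\<bar>) < ereal (real n)"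
    by (rule Limsup_lessD)
  then obtain b where b0: "b > 0" and b: "\<And>y. 0 < y \<Longrightarrow> y < b \<Longrightarrow> \<bar>g y\<bar> + \<bar>deriv g y\<bar> < real n"
    unfolding eventually_at_right_field by auto
  define M2 where "M2 = (real n)\<^sup>2"
  have M20: "M2 \<ge> 0" by (simp add: M2_def)
  define \<eta> where "\<eta> = s / (78 * C\<^sup>2 + 1)"
  have \<eta>0: "\<eta> > 0" unfolding \<eta>_def by (rule divide_pos_pos[OF s0]) (intro add_nonneg_pos; simp)
  have "\<forall>\<^sub>F x in at_top. x powr (\<mu> + 1) * (deriv g x)\<^sup>2 + x powr \<mu> * (g x)\<^sup>2 < \<eta>"
    by (rule order_tendstoD(2)[OF dec \<eta>0])
  then obtain N where N: "\<And>x. x \<ge> N \<Longrightarrow> x powr (\<mu> + 1) * (deriv g x)\<^sup>2 + x powr \<mu> * (g x)\<^sup>2 < \<eta>"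
    unfolding eventually_at_top_linorder by auto
  define \<kappa> where "\<kappa> = s / (200 * M2 * C\<^sup>2 + 1)"
  have \<kappa>0: "\<kappa> > 0" unfolding \<kappa>_def by (rule divide_pos_pos[OF s0]) (intro add_nonneg_pos; simp add: M20)
  have "((\<lambda>t::real. t powr (\<mu> - 2)) \<longlongrightarrow> 0) (at_right 0)"
    by (rule tendsto_zero_powrI[where b="\<mu> - 2"])
       (use mu in \<open>auto intro: eventually_mono[OF eventually_at_right_less]\<close>)
  then have "\<forall>\<^sub>F t in at_right 0. t powr (\<mu> - 2) < \<kappa>" by (rule order_tendstoD(2)[OF _ \<kappa>0])
  then obtain b2 where b20: "b2 > 0" and b2: "\<And>t. 0 < t \<Longrightarrow> t < b2 \<Longrightarrow> t powr (\<mu> - 2) < \<kappa>"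
    unfolding eventually_at_right_field by auto
  define t where "t = min 1 (min b (min d0 b2)) / 2"
  have t: "0 < t" "t < 1" "t < b" "t < d0" "t < b2" using b0 d0 b20 by (auto simp: t_def)
  define d where "d = t / 2"
  have d: "d > 0" "2 * d \<le> 1" "2 * d = t" using t by (auto simp: d_def)
  define R where "R = max (max 1 R1) (max N (t + 1))"
  have R: "R \<ge> 1" "R \<ge> R1" "R \<ge> N" "R > 2 * d" using d by (auto simp: R_def)
  define p where "p = (2 * d) powr (\<mu> - 2)"
  have p: "p \<ge> 0" "p < \<kappa>" using b2[of "2*d"] t d by (auto simp: p_def)
  have small: "\<And>y. 0 < y \<Longrightarrow> y \<le> 2 * d \<Longrightarrow> (g y)\<^sup>2 \<le> M2 \<and> (deriv g y)\<^sup>2 \<le> M2"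
  proof -
    fix y assume y: "0 < y" "y \<le> 2 * d"
    then have "\<bar>g y\<bar> + \<bar>deriv g y\<bar> < real n" using b t d by auto
    then have "\<bar>g y\<bar> \<le> real n" "\<bar>deriv g y\<bar> \<le> real n" by auto
    then show "(g y)\<^sup>2 \<le> M2 \<and> (deriv g y)\<^sup>2 \<le> M2" unfolding M2_def using sq_bound by blast
  qed
  have large: "\<And>y. R \<le> y \<Longrightarrow> y powr (\<mu> + 1) * (deriv g y)\<^sup>2 \<le> \<eta> \<and> y powr \<mu> * (g y)\<^sup>2 \<le> \<eta>"
  proof -
    fix y assume "R \<le> y"
    then have "y \<ge> N" "y > 0" using R by auto
    then have "y powr (\<mu> + 1) * (deriv g y)\<^sup>2 + y powr \<mu> * (g y)\<^sup>2 < \<eta>" using N by auto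
    moreover have "y powr (\<mu> + 1) * (deriv g y)\<^sup>2 \<ge> 0" "y powr \<mu> * (g y)\<^sup>2 \<ge> 0" by auto
    ultimately show "y powr (\<mu> + 1) * (deriv g y)\<^sup>2 \<le> \<eta> \<and> y powr \<mu> * (g y)\<^sup>2 \<le> \<eta>" by linarith
  qed

  define \<phi> where "\<phi> x = g x * (chi (x / d) - chi (x / R))" for x
  have Rd: "R > d" using R d by auto
  have cc: "Cc_inf \<phi>"
    unfolding Cc_inf_def
  proof
    have "smooth_on UNIV (\<lambda>x. chi (x / d) - chi (x / R))"
      by (intro smooth_diff smooth_chi_scaled) auto
    then have "smooth_on {0<..} (\<lambda>x. chi (x / d) - chi (x / R))" by (rule smooth_subset) auto
    then show "smooth_on {0<..} \<phi>" unfolding \<phi>_def[abs_def] by (intro smooth_mult sm) auto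
  next
    show "\<exists>a b. 0 < a \<and> a \<le> b \<and> (\<forall>x>0. x \<notin> {a..b} \<longrightarrow> \<phi> x = 0)"
    proof (intro exI conjI allI impI)
      fix x :: real assume x: "x > 0" "x \<notin> {d..2*R}"
      show "\<phi> x = 0"
      proof (cases "x < d")
        case True
        then have "x / d < 1" "x / R < 1" using d Rd x by (auto simp: divide_less_eq)
        then show ?thesis using chi_lo unfolding \<phi>_def by auto
      next
        case False
        then have "x > 2 * R" using x by auto
        then have "x / d > 2" "x / R > 2" using d R x by (auto simp: less_divide_eq)
        then show ?thesis using chi_hi unfolding \<phi>_def by auto
      qed
    qed (use d R in auto)
  qed
  define c where "c x = 1 - chi (x / d) + chi (x / R)" for x
  define c1 where "c1 x = - (deriv chi (x / d) / d) + deriv chi (x / R) / R" for x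
  define c2 where "c2 x = - (deriv (deriv chi) (x / d) / d / d) + deriv (deriv chi) (x / R) / R / R" for x
  have dc: "(c has_real_derivative c1 x) (at x)" for x
  proof -
    have "((\<lambda>x. 1 - chi (x / d) + chi (x / R)) has_real_derivative (0 - deriv chi (x / d) / d) + deriv chi (x / R) / R) (at x)"
      by (intro DERIV_add DERIV_diff DERIV_const scaled_deriv chi_deriv1)
    then show ?thesis unfolding c_def[abs_def] c1_def by simp
  qed
  have dc1: "(c1 has_real_derivative c2 x) (at x)" for x
  proof -
    have "((\<lambda>x. - (deriv chi (x / d) / d) + deriv chi (x / R) / R) has_real_derivative
        - (deriv (deriv chi) (x / d) / d / d) + deriv (deriv chi) (x / R) / R / R) (at x)"
      by (intro DERIV_add DERIV_minus DERIV_cdivide scaled_deriv chi_deriv2)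
    then show ?thesis unfolding c1_def[abs_def] c2_def by simp
  qed
  have cc2: "continuous_on {0<..} c2"
  proof -
    have a: "continuous_on {0<..} (\<lambda>x. deriv (deriv chi) (x / d) / d / d)"
      by (intro continuous_on_divide scaled_cont[OF chi_cont2] continuous_on_const) (use d in auto)
    have b: "continuous_on {0<..} (\<lambda>x. deriv (deriv chi) (x / R) / R / R)"
      by (intro continuous_on_divide scaled_cont[OF chi_cont2] continuous_on_const) (use R in auto)
    show ?thesis unfolding c2_def[abs_def] by (rule continuous_on_add[OF continuous_on_minus[OF a] b])
  qed
  have ccont: "continuous_on {0<..} c" "continuous_on {0<..} c1" "continuous_on {0<..} c2"
  proof -
    show "continuous_on {0<..} c" by (rule continuous_at_imp_continuous_on) (auto intro: DERIV_isCont dc)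
    show "continuous_on {0<..} c1" by (rule continuous_at_imp_continuous_on) (auto intro: DERIV_isCont dc1)
    show "continuous_on {0<..} c2" by (rule cc2)
  qed
  define E1 where "E1 x = deriv g x * c x + g x * c1 x" for x
  define E2 where "E2 x = deriv (deriv g) x * c x + deriv g x * c1 x + (deriv g x * c1 x + g x * c2 x)" for x
  have eeq: "(\<lambda>x. g x - \<phi> x) = (\<lambda>x. g x * c x)"
    by (rule ext) (simp add: \<phi>_def c_def algebra_simps)
  have de: "((\<lambda>x. g x * c x) has_real_derivative E1 x) (at x)" if "x > 0" for x
    using DERIV_mult[OF dg[OF that] dc[of x]] by (rule DERIV_cong) (simp add: E1_def algebra_simps)
  have dE1: "(E1 has_real_derivative E2 x) (at x)" if "x > 0" for x
  proof -
    have "((\<lambda>x. deriv g x * c x + g x * c1 x) has_real_derivative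
       (deriv (deriv g) x * c x + c1 x * deriv g x) + (deriv g x * c1 x + c2 x * g x)) (at x)"
      by (intro DERIV_add DERIV_mult dg1 dg that dc dc1)
    then show ?thesis unfolding E1_def[abs_def] by (rule DERIV_cong) (simp add: E2_def algebra_simps)
  qed
  have D1: "deriv (\<lambda>x. g x * c x) x = E1 x" if "x > 0" for x
    using de[OF that] by (rule DERIV_imp_deriv)
  have D2: "deriv (deriv (\<lambda>x. g x * c x)) x = E2 x" if "x > 0" for x
  proof -
    have "deriv (deriv (\<lambda>x. g x * c x)) x = deriv E1 x"
      by (rule deriv_local[where S="{0<..}"]) (use that D1 in auto)
    also have "\<dots> = E2 x" using dE1[OF that] by (rule DERIV_imp_deriv)
    finally show ?thesis .
  qed
  have cE1: "continuous_on {0<..} E1" unfolding E1_def[abs_def]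
    by (intro continuous_intros cg cg1 ccont)
  have cE2: "continuous_on {0<..} E2" unfolding E2_def[abs_def]
    by (intro continuous_intros cg cg1 cg2 ccont)
  define a2 where "a2 x = ennreal ((E2 x)\<^sup>2 * x powr (\<mu> + 1)) * indicator {0<..} x" for x
  define a1 where "a1 x = ennreal ((E1 x)\<^sup>2 * ((x + 1) * x powr \<mu>)) * indicator {0<..} x" for x
  define a0 where "a0 x = ennreal ((g x * c x)\<^sup>2 * x powr (\<mu> - 1)) * indicator {0<..} x" for x
  have ma2: "a2 \<in> borel_measurable lborel" unfolding a2_def[abs_def]
    by (rule meas_pos) (intro continuous_intros cE2; auto)
  have ma1: "a1 \<in> borel_measurable lborel" unfolding a1_def[abs_def]
    by (rule meas_pos) (intro continuous_intros cE1; auto)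
  have ma0: "a0 \<in> borel_measurable lborel" unfolding a0_def[abs_def]
    by (rule meas_pos) (intro continuous_intros cg ccont; auto)
  have De: "D_norm_sq \<mu> (\<lambda>x. g x - \<phi> x) = 4 * integral\<^sup>N lborel a2 + integral\<^sup>N lborel a1 + integral\<^sup>N lborel a0"
    unfolding D_norm_sq_def eeq
  proof (intro arg_cong2[where f="(+)"] arg_cong2[where f="(*)"] refl nn_integral_cong)
    fix x :: real
    show "ennreal ((deriv (deriv (\<lambda>x. g x * c x)) x)\<^sup>2 * x powr (\<mu> + 1)) * indicator {0<..} x = a2 x"
      by (cases "x > 0") (simp_all add: a2_def D2)
    show "ennreal ((deriv (\<lambda>x. g x * c x) x)\<^sup>2 * (x + 1) * x powr \<mu>) * indicator {0<..} x = a1 x"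
      by (cases "x > 0") (simp_all add: a1_def D1 mult.assoc)
    show "ennreal ((g x * c x)\<^sup>2 * x powr (\<mu> - 1)) * indicator {0<..} x = a0 x"
      by (simp add: a0_def)
  qed

  have Dsplit: "D_norm_sq \<mu> (\<lambda>x. g x - \<phi> x) = (\<integral>\<^sup>+x. 4 * a2 x + a1 x + a0 x \<partial>lborel)"
    unfolding De by (rule split3[OF ma2 ma1 ma0])
  define K1 where "K1 \<equiv> 48 * (M2 * (C\<^sup>2 / d\<^sup>2) * ((2*d) powr (\<mu> - 2) * (2*d)^3))
             + 12 * (M2 * (C\<^sup>2 / d\<^sup>2 / d\<^sup>2) * ((2*d) powr (\<mu> - 2) * (2*d)^3))
             + 2 * (M2 * (C\<^sup>2 / d\<^sup>2) * (2 * ((2*d) powr (\<mu> - 2) * (2*d)^2)))"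
  define K2 where "K2 \<equiv> 48 * ((C\<^sup>2 / R\<^sup>2) * \<eta>) + 12 * ((C\<^sup>2 / R\<^sup>2 / R\<^sup>2) * (2 * R) * \<eta>) + 2 * ((C\<^sup>2 / R\<^sup>2) * (2 * R + 1) * \<eta>)"
  have K1nn: "K1 \<ge> 0" unfolding K1_def using M20 d by (intro add_nonneg_nonneg mult_nonneg_nonneg) auto
  have K2nn: "K2 \<ge> 0" unfolding K2_def using \<eta>0 R by (intro add_nonneg_nonneg mult_nonneg_nonneg) auto
  define Bd where "Bd x = P x * indicator {..d0} x + P x * indicator {R1..} x
      + ennreal K1 * indicator {d..2*d} x + ennreal K2 * indicator {R..2*R} x" for x
  have pw: "4 * a2 x + a1 x + a0 x \<le> Bd x" for x
  proof (cases "x > 0")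
    case False
    then show ?thesis by (simp add: a2_def a1_def a0_def)
  next
    case True
    let ?L = "4 * ((E2 x)\<^sup>2 * x powr (\<mu> + 1)) + (E1 x)\<^sup>2 * ((x + 1) * x powr \<mu>) + (g x * c x)\<^sup>2 * x powr (\<mu> - 1)"
    have nn: "0 \<le> (E2 x)\<^sup>2 * x powr (\<mu> + 1)" "0 \<le> (E1 x)\<^sup>2 * ((x + 1) * x powr \<mu>)" "0 \<le> (g x * c x)\<^sup>2 * x powr (\<mu> - 1)"
      using True by auto
    have "4 * a2 x + a1 x + a0 x = ennreal ?L * indicator {0<..} x"
      unfolding a2_def a1_def a0_def by (rule ennreal_comb[OF nn])
    also have "\<dots> = ennreal ?L" using True by simp
    finally have L: "4 * a2 x + a1 x + a0 x = ennreal ?L" .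
    have ptw: "?L \<le> (if x \<le> 2 * d \<or> R \<le> x then H x else 0) + (if d \<le> x \<and> x \<le> 2 * d then K1 else 0)
      + (if R \<le> x \<and> x \<le> 2 * R then K2 else 0)"
      unfolding E2_def E1_def c_def c1_def c2_def H_def K1_def K2_def
      by (rule pointwise[OF True d(1) d(2) R(4) R(1) mu C small large])
    have Hnn: "H x \<ge> 0" using True by (simp add: H_def)
    have h1: "ennreal (if x \<le> 2 * d \<or> R \<le> x then H x else 0) \<le> P x * indicator {..d0} x + P x * indicator {R1..} x"
    proof (cases "x \<le> 2 * d")
      case True
      then have "x \<le> d0" using d t by auto
      then show ?thesis using True \<open>x > 0\<close> by (simp add: P_def)
    next
      case False
      show ?thesis
      proof (cases "R \<le> x")
        case True
        then have "R1 \<le> x" using R by auto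
        then show ?thesis using True \<open>x > 0\<close> by (simp add: P_def)
      qed (use False in simp)
    qed
    have h2: "ennreal (if d \<le> x \<and> x \<le> 2 * d then K1 else 0) = ennreal K1 * indicator {d..2*d} x"
      by (simp add: indicator_def)
    have h3: "ennreal (if R \<le> x \<and> x \<le> 2 * R then K2 else 0) = ennreal K2 * indicator {R..2*R} x"
      by (simp add: indicator_def)
    have "ennreal ?L \<le> ennreal ((if x \<le> 2 * d \<or> R \<le> x then H x else 0) + (if d \<le> x \<and> x \<le> 2 * d then K1 else 0)
      + (if R \<le> x \<and> x \<le> 2 * R then K2 else 0))" by (rule ennreal_leI[OF ptw])
    also have "\<dots> = ennreal (if x \<le> 2 * d \<or> R \<le> x then H x else 0) + ennreal (if d \<le> x \<and> x \<le> 2 * d then K1 else 0)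
      + ennreal (if R \<le> x \<and> x \<le> 2 * R then K2 else 0)"
      using Hnn K1nn K2nn by (subst ennreal_plus; simp)+
    also have "\<dots> \<le> Bd x" unfolding Bd_def h2 h3 using h1 by (intro add_right_mono)
    finally show ?thesis unfolding L .
  qed
  have [measurable]: "P \<in> borel_measurable borel" using mP by simp
  have IBd: "(\<integral>\<^sup>+x. Bd x \<partial>lborel) = (\<integral>\<^sup>+x. P x * indicator {..d0} x \<partial>lborel) + (\<integral>\<^sup>+x. P x * indicator {R1..} x \<partial>lborel)
     + ennreal K1 * ennreal d + ennreal K2 * ennreal R"
  proof -
    have "(\<integral>\<^sup>+x. Bd x \<partial>lborel) = (\<integral>\<^sup>+x. P x * indicator {..d0} x \<partial>lborel) + (\<integral>\<^sup>+x. P x * indicator {R1..} x \<partial>lborel)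
     + (\<integral>\<^sup>+x. ennreal K1 * indicator {d..2*d} x \<partial>lborel) + (\<integral>\<^sup>+x. ennreal K2 * indicator {R..2*R} x \<partial>lborel)"
      unfolding Bd_def by (subst nn_integral_add; (simp; measurable)?)+
    also have "(\<integral>\<^sup>+x. ennreal K1 * indicator {d..2*d} x \<partial>lborel) = ennreal K1 * ennreal d"
      using d by (subst nn_integral_cmult_indicator) auto
    also have "(\<integral>\<^sup>+x. ennreal K2 * indicator {R..2*R} x \<partial>lborel) = ennreal K2 * ennreal R"
      using R by (subst nn_integral_cmult_indicator) auto
    finally show ?thesis .
  qed
  define Q where "Q = M2 * C\<^sup>2 * p"
  have Q0: "Q \<ge> 0" using M20 p by (simp add: Q_def)
  have K1d: "K1 * d = Q * (384 * d\<^sup>2 + 96 + 16 * d)"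
    using d(1) unfolding K1_def Q_def p_def by (simp add: field_simps power2_eq_square eval_nat_numeral)
  have "384 * d\<^sup>2 + 96 + 16 * d \<le> 200"
  proof -
    have "d \<le> 1/2" using d by simp
    then have "d\<^sup>2 \<le> (1/2)\<^sup>2" using d by (intro power_mono) auto
    then show ?thesis using \<open>d \<le> 1/2\<close> by (simp add: power2_eq_square)
  qed
  then have "K1 * d \<le> Q * 200" unfolding K1d using Q0 by (intro mult_left_mono) auto
  also have "Q * 200 \<le> (200 * M2 * C\<^sup>2 + 1) * p" unfolding Q_def using p by (simp add: algebra_simps)
  also have "\<dots> \<le> (200 * M2 * C\<^sup>2 + 1) * \<kappa>" using p M20 by (intro mult_left_mono) auto
  also have "\<dots> = s"
  proof -
    have "200 * M2 * C\<^sup>2 + 1 > 0" by (intro add_nonneg_pos) (simp_all add: M20)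
    then show ?thesis unfolding \<kappa>_def by simp
  qed
  finally have K1s: "K1 * d \<le> s" .
  define U where "U = C\<^sup>2 * \<eta>"
  have U0: "U \<ge> 0" using \<eta>0 by (simp add: U_def)
  have K2R: "K2 * R = U * (50 / R + 24 / R\<^sup>2 + 4)"
    using R(1) unfolding K2_def U_def by (simp add: field_simps power2_eq_square)
  have "50 / R + 24 / R\<^sup>2 + 4 \<le> 78"
  proof -
    have "50 / R \<le> 50" using R(1) by (simp add: divide_le_eq)
    moreover have "24 / R\<^sup>2 \<le> 24" using R(1) by (simp add: divide_le_eq one_le_power)
    ultimately show ?thesis by linarith
  qed
  then have "K2 * R \<le> U * 78" unfolding K2R using U0 by (intro mult_left_mono) auto
  also have "U * 78 \<le> (78 * C\<^sup>2 + 1) * \<eta>" unfolding U_def using \<eta>0 by (simp add: algebra_simps)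
  also have "\<dots> = s"
  proof -
    have "78 * C\<^sup>2 + 1 > 0" by (intro add_nonneg_pos) simp_all
    then show ?thesis unfolding \<eta>_def by simp
  qed
  finally have K2s: "K2 * R \<le> s" .
  have "D_norm_sq \<mu> (\<lambda>x. g x - \<phi> x) \<le> (\<integral>\<^sup>+x. Bd x \<partial>lborel)"
    unfolding Dsplit by (rule nn_integral_mono) (rule pw)
  also have "\<dots> \<le> ennreal s + ennreal s + ennreal s + ennreal s"
  proof -
    have "ennreal K1 * ennreal d \<le> ennreal s" using K1s K1nn d by (simp add: ennreal_mult[symmetric] ennreal_leI)
    moreover have "ennreal K2 * ennreal R \<le> ennreal s" using K2s K2nn R by (simp add: ennreal_mult[symmetric] ennreal_leI)
    ultimately show ?thesis unfolding IBd using td0 tR1 by (intro add_mono) auto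
  qed
  also have "\<dots> = ennreal (4 * s)" using s0 by (simp flip: ennreal_plus)
  also have "\<dots> < ennreal (\<epsilon>\<^sup>2)" using assms(4) by (intro ennreal_lessI) (auto simp: s_def)
  finally show ?thesis using cc by blast
qed

end
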